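(* Let $t\ge 1$, $k\ge t+1$, $v\ge 2$, $\lambda\ge1$. If an SSOA$_\lambda(t,k,v)$ exists, then a simple COA$_\lambda(t,k+t-1,v)$ exists. Explicitly, if $A_1,\dots,A_k$ are the columns of the SSOA, the array $(A_1,A_2,\dots,A_k,A_1,A_2,\dots,A_{t-1})$ is such a simple COA.
   Context: An orthogonal array OA$_\lambda(t,k,v)$ is a $\lambda v^t\times k$ array over a $v$-set $V$ such that every $N\times t$ subarray contains every $t$-tuple exactly $\lambda$ times as a row. It is super-simple, written SSOA$_\lambda(t,k,v)$, if any $t+1$ of its columns contain every $(t+1)$-tuple at most once as a row. A COA$_\lambda(t,k,v)$ is a $\lambda v^t\times k$ array over $V$ in which every set of $t$ consecutive columns contains every $t$-tuple exactly $\lambda$ times. It is simple if for any two distinct sets of $t$ consecutive columns sharing exactly $i$ columns ($0\le i\le t-1$), the subarray on the $2t-i$ columns of their union contains each $(2t-i)$-tuple at most once. *)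

theory Defs
  imports Main
begin

definition is_array :: "'a set \<Rightarrow> nat \<Rightarrow> nat \<Rightarrow> 'a list list \<Rightarrow> bool" where
  "is_array V N k A \<longleftrightarrow> length A = N \<and> (\<forall>r\<in>set A. length r = k \<and> set r \<subseteq> V)"

definition tuple_count :: "'a list list \<Rightarrow> nat list \<Rightarrow> 'a list \<Rightarrow> nat" where
  "tuple_count A cs x = length (filter (\<lambda>r. map (\<lambda>c. r ! c) cs = x) A)"

definition OA :: "nat \<Rightarrow> nat \<Rightarrow> nat \<Rightarrow> 'a set \<Rightarrow> 'a list list \<Rightarrow> bool" where
  "OA lam t k V A \<longleftrightarrow> finite V \<and> is_array V (lam * card V ^ t) k A \<and>
     (\<forall>cs. distinct cs \<and> length cs = t \<and> set cs \<subseteq> {..<k} \<longrightarrow>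
        (\<forall>x. length x = t \<and> set x \<subseteq> V \<longrightarrow> tuple_count A cs x = lam))"

definition SSOA :: "nat \<Rightarrow> nat \<Rightarrow> nat \<Rightarrow> 'a set \<Rightarrow> 'a list list \<Rightarrow> bool" where
  "SSOA lam t k V A \<longleftrightarrow> OA lam t k V A \<and>
     (\<forall>cs. distinct cs \<and> length cs = t + 1 \<and> set cs \<subseteq> {..<k} \<longrightarrow>
        (\<forall>x. tuple_count A cs x \<le> 1))"

definition COA :: "nat \<Rightarrow> nat \<Rightarrow> nat \<Rightarrow> 'a set \<Rightarrow> 'a list list \<Rightarrow> bool" where
  "COA lam t k V A \<longleftrightarrow> finite V \<and> is_array V (lam * card V ^ t) k A \<and>
     (\<forall>i. i + t \<le> k \<longrightarrow>
        (\<forall>x. length x = t \<and> set x \<subseteq> V \<longrightarrow> tuple_count A [i..<i+t] x = lam))"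

text \<open>Simple: for any two distinct sets of t consecutive columns {a..<a+t}, {b..<b+t}
(they automatically share i columns with 0 <= i <= t-1), the subarray on the union of
their columns (in increasing order) contains each tuple at most once.\<close>
definition simple_COA :: "nat \<Rightarrow> nat \<Rightarrow> nat \<Rightarrow> 'a set \<Rightarrow> 'a list list \<Rightarrow> bool" where
  "simple_COA lam t k V A \<longleftrightarrow> COA lam t k V A \<and>
     (\<forall>a b. a < b \<and> b + t \<le> k \<longrightarrow>
        (\<forall>x. tuple_count A (sorted_list_of_set ({a..<a+t} \<union> {b..<b+t})) x \<le> 1))"

end

theory Submission
  imports Defs
begin

lemma filter_len_mono:
  assumes "\<forall>r\<in>set xs. P r \<longrightarrow> Q r"
  shows "length (filter P xs) \<le> length (filter Q xs)"
  using assms by (induction xs) auto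

lemma mod_small2:
  fixes c k :: nat
  assumes "c < 2 * k"
  shows "c mod k = (if c < k then c else c - k)"
  using assms by (simp add: le_mod_geq)

lemma ext_nth:
  assumes "length r = k" "t \<le> k + 1" "c < k + t - 1"
  shows "(r @ take (t - 1) r) ! c = r ! (c mod k)"
proof (cases "c < k")
  case True then show ?thesis using assms by (simp add: nth_append)
next
  case False
  have "c mod k = c - k" using False assms by (simp add: mod_small2)
  then show ?thesis using False assms by (simp add: nth_append)
qed

theorem mainTheorem5:
  fixes lam t k :: nat and V :: "'a set" and A :: "'a list list"
  assumes "t \<ge> 1" and "k \<ge> t + 1" and "finite V" and "card V \<ge> 2" and "lam \<ge> 1"
    and "SSOA lam t k V A"
  shows "simple_COA lam t (k + t - 1) V (map (\<lambda>r. r @ take (t - 1) r) A)"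
proof -
  define ext where "ext = (\<lambda>r::'a list. r @ take (t - 1) r)"
  have oa: "OA lam t k V A" and ss: "\<forall>cs. distinct cs \<and> length cs = t + 1 \<and> set cs \<subseteq> {..<k} \<longrightarrow>
        (\<forall>x. tuple_count A cs x \<le> 1)" using assms(6) unfolding SSOA_def by auto
  have arr: "is_array V (lam * card V ^ t) k A"
   and oac: "\<And>cs x. distinct cs \<Longrightarrow> length cs = t \<Longrightarrow> set cs \<subseteq> {..<k} \<Longrightarrow>
        length x = t \<Longrightarrow> set x \<subseteq> V \<Longrightarrow> tuple_count A cs x = lam"
    using oa unfolding OA_def by auto
  have rowlen: "\<And>r. r \<in> set A \<Longrightarrow> length r = k" and rowV: "\<And>r. r \<in> set A \<Longrightarrow> set r \<subseteq> V"
    using arr unfolding is_array_def by auto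
  have en: "\<And>r c. r \<in> set A \<Longrightarrow> c < k + t - 1 \<Longrightarrow> ext r ! c = r ! (c mod k)"
    unfolding ext_def using ext_nth[OF rowlen] assms(2) by simp
  have arrB: "is_array V (lam * card V ^ t) (k + t - 1) (map ext A)"
    using arr assms(1,2) unfolding is_array_def ext_def
    by (auto dest: in_set_takeD)
  have win_dist: "distinct (map (\<lambda>c. c mod k) [i..<i+t])" if "i + t \<le> k + t - 1" for i
  proof -
    have "inj_on (\<lambda>c. c mod k) {i..<i+t}"
    proof (rule inj_onI)
      fix c c' assume h: "c \<in> {i..<i+t}" "c' \<in> {i..<i+t}" "c mod k = c' mod k"
      have "c < 2*k" "c' < 2*k" using h(1,2) \<open>i + t \<le> k + t - 1\<close> assms(2) by auto
      then show "c = c'" using h \<open>i + t \<le> k + t - 1\<close> assms(2)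
        by (simp add: mod_small2 split: if_splits)
    qed
    then show ?thesis by (simp add: distinct_map)
  qed
  have coa: "COA lam t (k + t - 1) V (map ext A)"
    unfolding COA_def
  proof (intro conjI allI impI)
    show "finite V" by fact
    show "is_array V (lam * card V ^ t) (k + t - 1) (map ext A)" by fact
    fix i x assume i: "i + t \<le> k + t - 1" and x: "length x = t \<and> set x \<subseteq> V"
    have "tuple_count (map ext A) [i..<i+t] x = tuple_count A (map (\<lambda>c. c mod k) [i..<i+t]) x"
      unfolding tuple_count_def length_filter_map
    proof (rule arg_cong[where f=length], rule filter_cong)
      fix r assume r: "r \<in> set A"
      have hh: "map ((!) (ext r)) [i..<i+t] = map ((!) r) (map (\<lambda>c. c mod k) [i..<i+t])"
        using en[OF r] i by (auto intro!: map_cong)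
      show "((\<lambda>r. map ((!) r) [i..<i + t] = x) \<circ> ext) r =
          (map ((!) r) (map (\<lambda>c. c mod k) [i..<i + t]) = x)" by (simp only: comp_apply hh)
    qed simp
    also have "\<dots> = lam"
    proof (rule oac[OF win_dist[OF i]])
      show "set (map (\<lambda>c. c mod k) [i..<i + t]) \<subseteq> {..<k}" using assms(2) by auto
    qed (use x in auto)
    finally show "tuple_count (map ext A) [i..<i+t] x = lam" .
  qed
  have simp: "tuple_count (map ext A) (sorted_list_of_set ({a..<a+t} \<union> {b..<b+t})) x \<le> 1"
    if ab: "a < b" "b + t \<le> k + t - 1" for a b x
  proof -
    define L where "L = sorted_list_of_set ({a..<a+t} \<union> {b..<b+t})"
    have setL: "set L = {a..<a+t} \<union> {b..<b+t}" unfolding L_def by simp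
    define e where "e = min (b - 1) (a + t - 1)"
    define cs where "cs = e # map (\<lambda>c. c mod k) [b..<b+t]"
    have eL: "e \<in> set L" using ab assms(1) unfolding setL e_def by auto
    have ek: "e < k" "e mod k = e" using ab assms unfolding e_def by auto
    have enot: "e \<notin> set (map (\<lambda>c. c mod k) [b..<b+t])"
    proof
      assume "e \<in> set (map (\<lambda>c. c mod k) [b..<b+t])"
      then obtain c where c: "b \<le> c" "c < b + t" "c mod k = e" by auto
      have "c < 2*k" using c ab assms(2) by auto
      then show False using c ab assms(1,2) unfolding e_def
        by (simp add: mod_small2 split: if_splits)
    qed
    have dcs: "distinct cs" "length cs = t + 1" "set cs \<subseteq> {..<k}"
      using win_dist[OF ab(2)] enot ek assms(2) unfolding cs_def by auto
    have cover: "\<forall>d\<in>set cs. \<exists>c\<in>set L. d = c mod k"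
    proof
      fix d assume "d \<in> set cs"
      then show "\<exists>c\<in>set L. d = c mod k"
      proof (cases "d = e")
        case True then show ?thesis using eL ek(2) by metis
      next
        case False then show ?thesis using \<open>d \<in> set cs\<close> unfolding cs_def setL by auto
      qed
    qed
    have Lbound: "\<forall>c\<in>set L. c < k + t - 1" unfolding setL using ab by auto
    let ?P = "\<lambda>r. map ((!) (ext r)) L = x"
    show ?thesis
    proof (cases "\<exists>r0\<in>set A. ?P r0")
      case False
      then have "filter (?P) A = []" by (simp add: filter_empty_conv)
      then show ?thesis unfolding L_def[symmetric] tuple_count_def length_filter_map
        by (simp add: comp_def)
    next
      case True
      then obtain r0 where r0: "r0 \<in> set A" "?P r0" by blast
      have "\<forall>r\<in>set A. ?P r \<longrightarrow> map ((!) r) cs = map ((!) r0) cs"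
      proof (intro ballI impI)
        fix r assume r: "r \<in> set A" "?P r"
        have eq: "\<forall>c\<in>set L. ext r ! c = ext r0 ! c"
          using r(2) r0(2) by (metis map_eq_conv)
        show "map ((!) r) cs = map ((!) r0) cs"
        proof (rule map_cong[OF refl])
          fix d assume "d \<in> set cs"
          then obtain c where c: "c \<in> set L" "d = c mod k" using cover by blast
          then show "r ! d = r0 ! d" using eq en[OF r(1)] en[OF r0(1)] Lbound by metis
        qed
      qed
      then have "length (filter ?P A) \<le> tuple_count A cs (map ((!) r0) cs)"
        unfolding tuple_count_def by (rule filter_len_mono)
      also have "\<dots> \<le> 1" using ss dcs by blast
      finally show ?thesis unfolding L_def[symmetric] tuple_count_def length_filter_map
        by (simp add: comp_def)
    qed
  qed
  show ?thesis
    unfolding simple_COA_def ext_def[symmetric] using coa simp by blast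
qed

end
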